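(* Let $X$ be an irreducible holomorphic symplectic manifold of $\mathrm{OG6}$ type with a marking $\eta\colon H^2(X,\mathbb{Z})\to\mathbf{L}$, where $\mathbf{L}=U^{\oplus3}\oplus[-2]^{\oplus2}$. If $G\subset\mathrm{O}(\mathbf{L})$ is a nonsymplectic group of prime order $p$, then $p\in\{2,3,5,7\}$.
   Context: An irreducible holomorphic symplectic manifold is a simply connected compact Kähler manifold $X$ with $H^0(X,\Omega^2_X)$ spanned by a nowhere degenerate holomorphic 2-form $\sigma_X$; $\mathrm{OG6}$ type means deformation equivalent to O'Grady's six-dimensional example, and then $H^2(X,\mathbb{Z})$ with the Beauville–Bogomolov–Fujiki form is isometric to $\mathbf{L}$. A marking is an isometry $\eta\colon H^2(X,\mathbb{Z})\to\mathbf{L}$. An isometry $\varphi\in\mathrm{O}(\mathbf{L})$ is nonsymplectic if $\varphi\otimes\mathbb{C}$ acts nontrivially on the line $\mathbb{C}\,\eta(\sigma_X)$; a cyclic group is nonsymplectic if generated by a nonsymplectic isometry. $U$ is the hyperbolic plane, $[n]$ the rank one lattice with generator of square $n$. *)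

theory Defs
  imports "Jordan_Normal_Form.Matrix" "HOL-Computational_Algebra.Primes"
begin

text \<open>The lattice L = U^3 + [-2]^2, as Z^8 with Gram matrix L_gram
  (coordinates 0..5 carry three hyperbolic planes, 6 and 7 the two [-2] summands).\<close>
definition L_gram :: "int mat" where
  "L_gram = mat 8 8 (\<lambda>(i,j).
     if i < 6 \<and> j < 6 \<and> i div 2 = j div 2 \<and> i \<noteq> j then 1
     else if 6 \<le> i \<and> i = j then -2 else 0)"

definition isometry_L :: "int mat \<Rightarrow> bool" where
  "isometry_L \<phi> \<longleftrightarrow> \<phi> \<in> carrier_mat 8 8 \<and>
     transpose_mat \<phi> * L_gram * \<phi> = L_gram \<and>
     (\<exists>\<psi> \<in> carrier_mat 8 8. \<phi> * \<psi> = 1\<^sub>m 8 \<and> \<psi> * \<phi> = 1\<^sub>m 8)"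

definition L_form_C :: "complex vec \<Rightarrow> complex vec \<Rightarrow> complex" where
  "L_form_C x y = x \<bullet> (map_mat of_int L_gram *\<^sub>v y)"

text \<open>Period conditions satisfied by eta(sigma_X) (Beauville-Bogomolov / Hodge-Riemann):
  q(w) = 0 and q(w, conj w) > 0.\<close>
definition period_vec :: "complex vec \<Rightarrow> bool" where
  "period_vec \<omega> \<longleftrightarrow> \<omega> \<in> carrier_vec 8 \<and> L_form_C \<omega> \<omega> = 0 \<and>
     Im (L_form_C (map_vec cnj \<omega>) \<omega>) = 0 \<and> Re (L_form_C (map_vec cnj \<omega>) \<omega>) > 0"

definition nonsymplectic :: "complex vec \<Rightarrow> int mat \<Rightarrow> bool" where
  "nonsymplectic \<omega> \<phi> \<longleftrightarrow>
     (\<exists>c. c \<noteq> 1 \<and> map_mat of_int \<phi> *\<^sub>v \<omega> = c \<cdot>\<^sub>v \<omega>)"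

end

theory Submission
  imports Defs "Jordan_Normal_Form.Char_Poly"
begin

lemma eis_aux:
  fixes g h F :: "int poly" and p :: int
  assumes pr: "prime p" and F: "F = g * h" and c0: "coeff F 0 = p"
    and lc: "\<not> p dvd lead_coeff F" and mid: "\<forall>i<degree F. p dvd coeff F i"
    and g0: "p dvd coeff g 0" and dh: "degree h > 0"
  shows False
proof -
  have gnz: "g \<noteq> 0" using c0 F pr by auto
  have hnz: "h \<noteq> 0" using dh by auto
  have h0: "\<not> p dvd coeff h 0"
  proof
    assume "p dvd coeff h 0"
    then have "p * p dvd coeff g 0 * coeff h 0" using g0 by (simp add: mult_dvd_mono)
    also have "coeff g 0 * coeff h 0 = p" using c0 F by (simp add: coeff_mult)
    finally have "p * p dvd p * 1" by simp
    then have "p dvd 1" using pr by (subst (asm) dvd_mult_cancel_left) auto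
    then show False using pr not_prime_unit by blast
  qed
  have "lead_coeff F = lead_coeff g * lead_coeff h" using F by (simp add: lead_coeff_mult)
  then have lg: "\<not> p dvd lead_coeff g" using lc by auto
  define i where "i = (LEAST i. \<not> p dvd coeff g i)"
  have ex: "\<exists>i. \<not> p dvd coeff g i" using lg by blast
  have gi: "\<not> p dvd coeff g i" unfolding i_def using ex by (rule LeastI_ex)
  have lt: "\<And>j. j < i \<Longrightarrow> p dvd coeff g j" unfolding i_def using not_less_Least by blast
  have i0: "i \<noteq> 0" proof assume "i = 0" then show False using gi g0 by simp qed
  have ile: "i \<le> degree g"
  proof (rule ccontr)
    assume "\<not> i \<le> degree g"
    then have "coeff g i = 0" by (simp add: coeff_eq_0)
    then show False using gi by simp
  qed
  have dF: "degree F = degree g + degree h" using F gnz hnz by (simp add: degree_mult_eq)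
  have "i < degree F" using ile dF dh by simp
  then have "p dvd coeff F i" using mid by auto
  also have "coeff F i = (\<Sum>j<i. coeff g j * coeff h (i - j)) + coeff g i * coeff h 0"
  proof -
    obtain i' where ii: "i = Suc i'" using i0 by (cases i) auto
    have "coeff F i = (\<Sum>j\<le>Suc i'. coeff g j * coeff h (Suc i' - j))" using F ii by (simp only: coeff_mult)
    also have "\<dots> = (\<Sum>j\<le>i'. coeff g j * coeff h (Suc i' - j)) + coeff g (Suc i') * coeff h 0"
      by (simp only: sum.atMost_Suc diff_self_eq_0)
    also have "{..i'} = {..<i}" using ii by auto
    finally show ?thesis using ii by simp
  qed
  finally have A: "p dvd (\<Sum>j<i. coeff g j * coeff h (i - j)) + coeff g i * coeff h 0" .
  have B: "p dvd (\<Sum>j<i. coeff g j * coeff h (i - j))"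
    by (rule dvd_sum) (simp add: lt)
  have "p dvd coeff g i * coeff h 0" using A B by (simp add: dvd_add_right_iff)
  then show False using gi h0 pr by (simp add: prime_dvd_mult_iff)
qed

lemma eisenstein:
  fixes g h F :: "int poly" and p :: int
  assumes pr: "prime p" and F: "F = g * h" and c0: "coeff F 0 = p"
    and lc: "\<not> p dvd lead_coeff F" and mid: "\<forall>i<degree F. p dvd coeff F i"
  shows "degree g = 0 \<or> degree h = 0"
proof (rule ccontr)
  assume a: "\<not> (degree g = 0 \<or> degree h = 0)"
  have "p dvd coeff g 0 * coeff h 0" using c0 F by (simp add: coeff_mult)
  then have "p dvd coeff g 0 \<or> p dvd coeff h 0" using pr by (simp add: prime_dvd_mult_iff)
  then show False
  proof
    assume "p dvd coeff g 0" then show False using eis_aux[OF pr F c0 lc mid] a by auto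
  next
    assume "p dvd coeff h 0" then show False using eis_aux[OF pr _ c0 lc mid, of h g] F a by (auto simp: mult.commute)
  qed
qed

definition cyc :: "nat \<Rightarrow> 'a::comm_ring_1 poly" where "cyc p = (\<Sum>i<p. monom 1 i)"

lemma poly_cyc_mult: "(x - 1) * poly (cyc p) x = x ^ p - (1::'a::comm_ring_1)"
  by (simp add: cyc_def poly_sum poly_monom power_diff_1_eq)

lemma coeff_cyc: "coeff (cyc p) n = (if n < p then 1 else 0)"
  by (simp add: cyc_def coeff_sum)

lemma map_cyc: "map_poly (of_int :: int \<Rightarrow> 'a::comm_ring_1) (cyc p) = cyc p"
  by (rule poly_eqI) (simp add: coeff_map_poly coeff_cyc)

lemma cyc_mult: "[:-1,1:] * cyc p = monom 1 p - (1::int poly)"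
proof (rule poly_ext)
  fix x :: int show "poly ([:-1,1:] * cyc p) x = poly (monom 1 p - 1) x"
    using poly_cyc_mult[of x p] by (simp add: poly_monom algebra_simps)
qed

lemma shift_eq: "[:0,1:] * pcompose (cyc p) [:1,1:] = [:1,1:] ^ p - (1::int poly)"
proof (rule poly_ext)
  fix x :: int show "poly ([:0,1:] * pcompose (cyc p) [:1,1:]) x = poly ([:1,1:] ^ p - 1) x"
    using poly_cyc_mult[of "1 + x" p] by (simp add: poly_pcompose algebra_simps)
qed

lemma coeff_shift: "coeff (pcompose (cyc p) [:1,1::int:]) i = int (p choose Suc i)"
proof -
  have "coeff ([:1,1:]^p - (1::int poly)) (Suc i) = coeff ([:0,1:] * pcompose (cyc p) [:1,1:]) (Suc i)"
    by (simp only: shift_eq)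
  then have "coeff (pcompose (cyc p) [:1,1::int:]) i = coeff ([:1,1:] ^ p) (Suc i)"
    by simp
  also have "\<dots> = int (p choose Suc i)"
  proof (cases "Suc i \<le> p")
    case True then show ?thesis by (simp add: coeff_linear_poly_power)
  next
    case False
    have "degree ([:1,1::int:]^p) \<le> p" using degree_power_le[of "[:1,1::int:]" p] by simp
    then show ?thesis using False by (simp add: coeff_eq_0)
  qed
  finally show ?thesis .
qed

lemma degree_cyc: "p > 0 \<Longrightarrow> degree (cyc p) = p - 1"
proof (rule le_antisym)
  assume "p > 0"
  show "degree (cyc p) \<le> p - 1" by (rule degree_le) (auto simp: coeff_cyc)
  show "p - 1 \<le> degree (cyc p)" using \<open>p > 0\<close> by (intro le_degree) (simp add: coeff_cyc)
qed

lemma content_cyc: "p > 0 \<Longrightarrow> content (cyc p :: int poly) = 1"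
proof -
  assume "p > 0"
  have "content (cyc p :: int poly) dvd coeff (cyc p) 0" by (rule content_dvd_coeff)
  then have "content (cyc p :: int poly) dvd 1" using \<open>p > 0\<close> by (simp add: coeff_cyc)
  moreover have "content (cyc p :: int poly) \<ge> 0" by (metis abs_ge_zero normalize_content normalize_int_def)
  ultimately show ?thesis by simp
qed

lemma root_unity_degree:
  fixes f :: "int poly" and c :: complex and p :: nat
  assumes pr: "prime p" and cp: "c ^ p = 1" and c1: "c \<noteq> 1" and f0: "f \<noteq> 0"
    and fc: "poly (map_poly of_int f) c = 0"
  shows "p - 1 \<le> degree f"
proof -
  define E where "E g = poly (map_poly (of_int::int\<Rightarrow>complex) g) c" for g
  have Emult: "E (g * h) = E g * E h" for g h by (simp add: E_def hom_distribs)
  have Eadd: "E (g + h) = E g + E h" for g h by (simp add: E_def hom_distribs)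
  have Esmult: "E (smult a g) = of_int a * E g" for a g by (simp add: E_def hom_distribs)
  define S where "S = {g. g \<noteq> 0 \<and> E g = 0}"
  have fS: "f \<in> S" using f0 fc by (simp add: S_def E_def)
  define d where "d = (LEAST n. \<exists>g\<in>S. degree g = n)"
  have ex: "\<exists>n. \<exists>g\<in>S. degree g = n" using fS by blast
  obtain m0 where m0S: "m0 \<in> S" and dm0: "degree m0 = d"
    using LeastI_ex[OF ex] unfolding d_def[symmetric] by blast
  have dmin: "d \<le> degree g" if "g \<in> S" for g
    unfolding d_def using that by (intro Least_le) blast
  define m where "m = primitive_part m0"
  have m0nz: "m0 \<noteq> 0" using m0S by (simp add: S_def)
  have mnz: "m \<noteq> 0" using m0nz by (simp add: m_def)
  have dm: "degree m = d" using dm0 by (simp add: m_def)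
  have cm: "content m = 1" using m0nz by (simp add: m_def)
  have "E m0 = of_int (content m0) * E m"
    by (metis Esmult content_times_primitive_part m_def)
  then have Em: "E m = 0" using m0S m0nz by (simp add: S_def)
  have p0: "p > 0" using pr prime_gt_0_nat by blast
  have "(c - 1) * poly (cyc p) c = c ^ p - 1" by (rule poly_cyc_mult)
  then have "poly (cyc p) c = 0" using cp c1 by simp
  then have Ecyc: "E (cyc p) = 0" by (simp add: E_def map_cyc)
  define r where "r = pseudo_mod (cyc p) m"
  obtain a q where a0: "a \<noteq> 0" and aq: "smult a (cyc p) = m * q + r"
    using pseudo_mod(1)[OF mnz, of "cyc p"] unfolding r_def by blast
  have rdeg: "r = 0 \<or> degree r < degree m" using pseudo_mod(2)[OF mnz, of "cyc p"] unfolding r_def by blast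
  have "E (smult a (cyc p)) = E (m * q) + E r" using aq Eadd by simp
  then have Er: "E r = 0" using Ecyc Em Esmult Emult by simp
  have r0: "r = 0"
  proof (rule ccontr)
    assume "r \<noteq> 0"
    then have "r \<in> S" using Er by (simp add: S_def)
    then have "d \<le> degree r" by (rule dmin)
    then show False using rdeg \<open>r \<noteq> 0\<close> dm by simp
  qed
  have aq2: "smult a (cyc p) = m * q" using aq r0 by simp
  have "content (smult a (cyc p)) = \<bar>a\<bar>" using content_cyc[OF p0] by simp
  moreover have "content (m * q) = content q" by (simp add: content_mult cm)
  ultimately have cq: "content q = \<bar>a\<bar>" using aq2 by simp
  define q1 where "q1 = primitive_part q"
  have "q = smult \<bar>a\<bar> q1" unfolding q1_def by (metis cq content_times_primitive_part)
  then have eq1: "smult a (cyc p) = smult \<bar>a\<bar> (m * q1)" using aq2 by simp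
  obtain q' where cycfac: "cyc p = m * q'"
  proof (cases "a > 0")
    case True
    then have "smult a (cyc p) = smult a (m * q1)" using eq1 by simp
    then have "cyc p = m * q1" using a0 by (simp add: smult_cancel)
    then show ?thesis using that by blast
  next
    case False
    then have "smult a (cyc p) = smult a (m * (- q1))" using eq1 a0 by simp
    then have "cyc p = m * (-q1)" using a0 by (simp add: smult_cancel)
    then show ?thesis using that by blast
  qed
  have "p - 1 \<le> d"
  proof (rule ccontr)
    assume lt: "\<not> p - 1 \<le> d"
    define F where "F = pcompose (cyc p) [:1,1::int:]"
    have Ffac: "F = pcompose m [:1,1:] * pcompose q' [:1,1:]"
      unfolding F_def cycfac by (simp add: pcompose_mult)
    have dF: "degree F = p - 1" unfolding F_def by (simp add: degree_pcompose degree_cyc[OF p0])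
    have prI: "prime (int p)" using pr by simp
    have c0: "coeff F 0 = int p" unfolding F_def coeff_shift by simp
    have lcF: "lead_coeff F = 1" unfolding dF unfolding F_def coeff_shift using p0 by simp
    have p1: "p \<noteq> 1" using pr by (metis not_prime_1)
    have nd: "\<not> int p dvd lead_coeff F" using lcF p1 by simp
    have mid: "\<forall>i<degree F. int p dvd coeff F i"
    proof (intro allI impI)
      fix i assume "i < degree F"
      then have "Suc i < p" using dF by simp
      then have "p dvd (p choose Suc i)" using pr by (intro dvd_choose_prime) auto
      then show "int p dvd coeff F i" unfolding F_def coeff_shift by simp
    qed
    have "degree (pcompose m [:1,1:]) = 0 \<or> degree (pcompose q' [:1,1::int:]) = 0"
      by (rule eisenstein[OF prI Ffac c0 nd mid])
    then have "degree m = 0 \<or> degree q' = 0" by (simp add: degree_pcompose)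
    then show False
    proof
      assume "degree m = 0"
      then obtain k where "m = [:k:]" by (metis degree_eq_zeroE)
      then have "E m = of_int k" "k \<noteq> 0" using mnz by (auto simp: E_def)
      then show False using Em by simp
    next
      assume dq: "degree q' = 0"
      have cnz: "cyc p \<noteq> (0::int poly)"
      proof
        assume "cyc p = (0::int poly)"
        then have "coeff (cyc p) 0 = (0::int)" by simp
        then show False using p0 by (simp add: coeff_cyc)
      qed
      have qnz: "q' \<noteq> 0" using cycfac cnz by auto
      have "degree (cyc p :: int poly) = degree m" unfolding cycfac using degree_mult_eq[OF mnz qnz] dq by simp
      then show False using degree_cyc[OF p0, where ?'a=int] dm lt by simp
    qed
  qed
  then show ?thesis using dmin[OF fS] by simp
qed

lemma pow_add_mat: "A \<in> carrier_mat n n \<Longrightarrow> A ^\<^sub>m (a + b) = A ^\<^sub>m a * A ^\<^sub>m b"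
proof (induction b)
  case 0 then show ?case by simp
next
  case (Suc b)
  have "A ^\<^sub>m (a + Suc b) = (A ^\<^sub>m a * A ^\<^sub>m b) * A" using Suc by simp
  also have "\<dots> = A ^\<^sub>m a * (A ^\<^sub>m b * A)" using Suc.prems by (simp add: assoc_mult_mat[of _ n n _ n _ n])
  finally show ?case by simp
qed

lemma one_pow_mat: "(1\<^sub>m n :: 'a::semiring_1 mat) ^\<^sub>m k = 1\<^sub>m n"
  by (induction k) simp_all

lemma pow_mult_mat: "A \<in> carrier_mat n n \<Longrightarrow> A ^\<^sub>m (a * b) = (A ^\<^sub>m a) ^\<^sub>m b"
proof (induction b)
  case 0 then show ?case by simp
next
  case (Suc b)
  have "A ^\<^sub>m (a * Suc b) = A ^\<^sub>m (a * b + a)" by (simp add: add.commute)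
  also have "\<dots> = A ^\<^sub>m (a * b) * A ^\<^sub>m a" using Suc.prems by (rule pow_add_mat)
  finally show ?case using Suc by simp
qed

lemma pow_cancel_mat:
  assumes A: "A \<in> carrier_mat n n" and B: "B \<in> carrier_mat n n" and BA: "B * A = 1\<^sub>m n"
    and X: "X \<in> carrier_mat n n" and Y: "Y \<in> carrier_mat n n"
  shows "A ^\<^sub>m a * X = A ^\<^sub>m a * Y \<Longrightarrow> X = Y"
proof (induction a)
  case 0 then show ?case using A X Y by simp
next
  case (Suc a)
  have e: "A ^\<^sub>m Suc a = A * A ^\<^sub>m a" using pow_add_mat[OF A, of 1 a] A by simp
  have "A * (A ^\<^sub>m a * X) = A * (A ^\<^sub>m a * Y)"
    using Suc.prems A X Y unfolding e by (simp add: assoc_mult_mat[of _ n n _ n _ n])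
  then have "B * (A * (A ^\<^sub>m a * X)) = B * (A * (A ^\<^sub>m a * Y))" by simp
  moreover have "(B * A) * (A ^\<^sub>m a * X) = B * (A * (A ^\<^sub>m a * X))"
    by (rule assoc_mult_mat[OF B A, of _ n]) (rule mult_carrier_mat[OF pow_carrier_mat[OF A] X])
  moreover have "(B * A) * (A ^\<^sub>m a * Y) = B * (A * (A ^\<^sub>m a * Y))"
    by (rule assoc_mult_mat[OF B A, of _ n]) (rule mult_carrier_mat[OF pow_carrier_mat[OF A] Y])
  ultimately have "(B * A) * (A ^\<^sub>m a * X) = (B * A) * (A ^\<^sub>m a * Y)" by simp
  then have "A ^\<^sub>m a * X = A ^\<^sub>m a * Y" using BA A X Y by simp
  then show ?case by (rule Suc.IH)
qed

lemma order_mat: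
  assumes A: "A \<in> carrier_mat n n" and B: "B \<in> carrier_mat n n" and BA: "B * A = 1\<^sub>m n"
    and fin: "finite {A ^\<^sub>m k | k. True}"
  shows "card {A ^\<^sub>m k | k. True} = (LEAST d. 0 < d \<and> A ^\<^sub>m d = 1\<^sub>m n)"
    and "A ^\<^sub>m (LEAST d. 0 < d \<and> A ^\<^sub>m d = 1\<^sub>m n) = 1\<^sub>m n"
proof -
  have eqr: "{A ^\<^sub>m k | k. True} = range (\<lambda>k. A ^\<^sub>m k)" by auto
  have "\<not> inj (\<lambda>k. A ^\<^sub>m k)"
    using fin finite_imageD[of "\<lambda>k. A ^\<^sub>m k" UNIV] unfolding eqr by auto
  then obtain a b where ab: "a \<noteq> b" "A ^\<^sub>m a = A ^\<^sub>m b" unfolding inj_def by blast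
  have ex1: "\<exists>d. 0 < d \<and> A ^\<^sub>m d = 1\<^sub>m n" if lt: "a < b" and e: "A ^\<^sub>m a = A ^\<^sub>m b" for a b
  proof -
    have "A ^\<^sub>m a * A ^\<^sub>m (b - a) = A ^\<^sub>m a * 1\<^sub>m n"
      using pow_add_mat[OF A, of a "b - a"] lt e A by simp
    then have "A ^\<^sub>m (b - a) = 1\<^sub>m n" using pow_cancel_mat[OF A B BA] A by simp
    then show ?thesis using lt by (intro exI[of _ "b - a"]) simp
  qed
  have ex: "\<exists>d. 0 < d \<and> A ^\<^sub>m d = 1\<^sub>m n"
    using ab ex1 by (metis linorder_neqE_nat)
  define d where "d = (LEAST d. 0 < d \<and> A ^\<^sub>m d = 1\<^sub>m n)"
  have d: "0 < d" "A ^\<^sub>m d = 1\<^sub>m n" using LeastI_ex[OF ex] unfolding d_def[symmetric] by auto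
  have dmin: "\<And>k. 0 < k \<Longrightarrow> k < d \<Longrightarrow> A ^\<^sub>m k \<noteq> 1\<^sub>m n"
    unfolding d_def using not_less_Least by blast
  show "A ^\<^sub>m d = 1\<^sub>m n" by (rule d(2))
  have modd: "A ^\<^sub>m k = A ^\<^sub>m (k mod d)" for k
  proof -
    have "A ^\<^sub>m k = A ^\<^sub>m (d * (k div d)) * A ^\<^sub>m (k mod d)"
      using pow_add_mat[OF A, of "d * (k div d)" "k mod d"] by simp
    also have "\<dots> = (A ^\<^sub>m d) ^\<^sub>m (k div d) * A ^\<^sub>m (k mod d)"
      using pow_mult_mat[OF A] by simp
    also have "\<dots> = A ^\<^sub>m (k mod d)" using d A by (simp add: one_pow_mat)
    finally show ?thesis .
  qed
  have img: "{A ^\<^sub>m k | k. True} = (\<lambda>k. A ^\<^sub>m k) ` {..<d}"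
  proof
    show "{A ^\<^sub>m k | k. True} \<subseteq> (\<lambda>k. A ^\<^sub>m k) ` {..<d}"
    proof
      fix X assume "X \<in> {A ^\<^sub>m k | k. True}"
      then obtain k where "X = A ^\<^sub>m k" by blast
      then have "X = A ^\<^sub>m (k mod d)" using modd by simp
      moreover have "k mod d < d" using d by simp
      ultimately show "X \<in> (\<lambda>k. A ^\<^sub>m k) ` {..<d}" by blast
    qed
  qed auto
  have inj: "inj_on (\<lambda>k. A ^\<^sub>m k) {..<d}"
  proof (rule inj_onI)
    fix i j assume i: "i \<in> {..<d}" and j: "j \<in> {..<d}" and e: "A ^\<^sub>m i = A ^\<^sub>m j"
    have no: False if lt: "a < b" and b: "b < d" and e: "A ^\<^sub>m a = A ^\<^sub>m b" for a b
    proof -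
      have "A ^\<^sub>m a * A ^\<^sub>m (b - a) = A ^\<^sub>m a * 1\<^sub>m n"
        using pow_add_mat[OF A, of a "b - a"] lt e A by simp
      then have "A ^\<^sub>m (b - a) = 1\<^sub>m n" using pow_cancel_mat[OF A B BA] A by simp
      then show False using dmin[of "b - a"] lt b by simp
    qed
    show "i = j"
    proof (rule ccontr)
      assume "i \<noteq> j"
      then show False using no[of i j] no[of j i] i j e by (auto simp: linorder_neq_iff)
    qed
  qed
  show "card {A ^\<^sub>m k | k. True} = d" unfolding img using card_image[OF inj] by simp
qed

lemma small_primes: "prime (p::nat) \<Longrightarrow> p \<le> 9 \<Longrightarrow> p \<in> {2, 3, 5, 7}"
proof -
  assume pr: "prime p" and le: "p \<le> 9"
  have "p \<in> {0,1,2,3,4,5,6,7,8,9}" using le by auto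
  moreover have "\<not> prime (4::nat)" using prime_product[of "2::nat" 2] by simp
  moreover have "\<not> prime (6::nat)" using prime_product[of "2::nat" 3] by simp
  moreover have "\<not> prime (8::nat)" using prime_product[of "2::nat" 4] by simp
  moreover have "\<not> prime (9::nat)" using prime_product[of "3::nat" 3] by simp
  ultimately show ?thesis using pr by auto
qed

theorem proposition3p3:
  fixes \<omega> :: "complex vec" and G :: "int mat set" and \<phi> :: "int mat" and p :: nat
  assumes "period_vec \<omega>"
    and "isometry_L \<phi>"
    and "G = {\<phi> ^\<^sub>m k | k. True}"
    and "nonsymplectic \<omega> \<phi>"
    and "prime p"
    and "card G = p"
  shows "p \<in> {2, 3, 5, 7}"
proof -
  note per = assms(1) and iso = assms(2) and Gd = assms(3) and ns = assms(4) and pr = assms(5) and cG = assms(6)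
  have phi: "\<phi> \<in> carrier_mat 8 8" using iso by (simp add: isometry_L_def)
  obtain \<psi> where psi: "\<psi> \<in> carrier_mat 8 8" and pp: "\<psi> * \<phi> = 1\<^sub>m 8"
    using iso by (auto simp: isometry_L_def)
  have p0: "p > 0" using pr prime_gt_0_nat by blast
  have "card {\<phi> ^\<^sub>m k | k. True} > 0" using cG p0 Gd by simp
  then have fin: "finite {\<phi> ^\<^sub>m k | k. True}" by (rule card_ge_0_finite)
  have ord: "\<phi> ^\<^sub>m p = 1\<^sub>m 8"
    using order_mat[OF phi psi pp fin] cG Gd by simp
  have om: "\<omega> \<in> carrier_vec 8" using per by (simp add: period_vec_def)
  have onz: "\<omega> \<noteq> 0\<^sub>v 8"
  proof
    assume "\<omega> = 0\<^sub>v 8"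
    moreover have z: "map_vec cnj (0\<^sub>v 8) = (0\<^sub>v 8 :: complex vec)" by (rule eq_vecI) auto
    moreover have "0\<^sub>v 8 \<bullet> (map_mat of_int L_gram *\<^sub>v (0\<^sub>v 8 :: complex vec)) = 0"
    proof (rule scalar_prod_left_zero)
      have Lc: "L_gram \<in> carrier_mat 8 8" unfolding L_gram_def by (rule mat_carrier)
      then have "map_mat (of_int::int\<Rightarrow>complex) L_gram \<in> carrier_mat 8 8" by simp
      then show "map_mat of_int L_gram *\<^sub>v (0\<^sub>v 8 :: complex vec) \<in> carrier_vec 8"
        by (rule mult_mat_vec_carrier) simp
    qed
    ultimately have "L_form_C (map_vec cnj \<omega>) \<omega> = 0"
      unfolding L_form_C_def by simp
    then show False using per by (simp add: period_vec_def)
  qed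
  obtain c where c1: "c \<noteq> 1" and ev: "map_mat of_int \<phi> *\<^sub>v \<omega> = c \<cdot>\<^sub>v \<omega>"
    using ns by (auto simp: nonsymplectic_def)
  define A :: "complex mat" where "A = map_mat of_int \<phi>"
  have A: "A \<in> carrier_mat 8 8" using phi by (simp add: A_def)
  have eig: "eigenvector A \<omega> c" unfolding eigenvector_def using A om onz ev by (simp add: A_def)
  have "A ^\<^sub>m p *\<^sub>v \<omega> = c ^ p \<cdot>\<^sub>v \<omega>" by (rule eigenvector_pow[OF A eig])
  moreover have "A ^\<^sub>m p = 1\<^sub>m 8"
    unfolding A_def of_int_hom.mat_hom_pow[OF phi, symmetric] ord by (rule of_int_hom.mat_hom_one)
  ultimately have "\<omega> = c ^ p \<cdot>\<^sub>v \<omega>" using om by simp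
  moreover have "\<exists>i<8. \<omega> $ i \<noteq> 0"
  proof (rule ccontr)
    assume "\<not> (\<exists>i<8. \<omega> $ i \<noteq> 0)"
    then have "\<omega> = 0\<^sub>v 8" using om by (intro eq_vecI) auto
    then show False using onz by simp
  qed
  then obtain i where i: "i < 8" "\<omega> $ i \<noteq> 0" by blast
  ultimately have "\<omega> $ i = (c ^ p \<cdot>\<^sub>v \<omega>) $ i" by simp
  then have "\<omega> $ i = c ^ p * \<omega> $ i" using i om by simp
  then have cp: "c ^ p = 1" using i by simp
  have "eigenvalue A c" using eig by (auto simp: eigenvalue_def)
  then have "poly (char_poly A) c = 0" using eigenvalue_root_char_poly[OF A] by simp
  moreover have "char_poly A = map_poly of_int (char_poly \<phi>)"
    unfolding A_def by (rule of_int_hom.char_poly_hom[OF phi])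
  ultimately have root: "poly (map_poly of_int (char_poly \<phi>)) c = 0" by simp
  have dc: "degree (char_poly \<phi>) = 8 \<and> coeff (char_poly \<phi>) 8 = 1" by (rule degree_monic_char_poly[OF phi])
  then have cnz: "char_poly \<phi> \<noteq> 0" by auto
  have "p - 1 \<le> degree (char_poly \<phi>)" by (rule root_unity_degree[OF pr cp c1 cnz root])
  then have "p \<le> 9" using dc by simp
  then show ?thesis using small_primes pr by blast
qed

end
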